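(* Under the setting in the context, for any $u\in\mathbb{R}^d$ and every $S\ge2$, $$KA_S(\bar f(\tilde y_S)-\bar f(u))\le\frac K2\|x_0-u\|^2-\frac{K(1+A_S\gamma)}{2}\|v_{S,K}-u\|^2-\frac K4\|v_{1,1}-v_{1,0}\|^2+\sum_{s=2}^S\sum_{k=1}^K E_{s,k}(u),$$ where $$E_{s,k}(u)=A_s(f(y_{s,k})-f(x_{s,k}))-A_{s-1}(f(\tilde y_{s-1})-f(x_{s,k}))+a_s\langle\nabla f(x_{s,k})-q_{s,k},x_{s,k}-u\rangle+a_s\langle q_{s,k},x_{s,k}-v_{s,k}\rangle-\frac{K(1+A_{s-1}\gamma)}{2}\|v_{s,k}-v_{s,k-1}\|^2.$$
   Context: Problem $\min_x\bar f(x)=f(x)+g(x)$, where $f:\mathbb{R}^d\to\mathbb{R}$ is convex, continuously differentiable and satisfies $f(y)\le f(x)+\langle\nabla f(x),y-x\rangle+\frac L2\|y-x\|^2$ for all $x,y$ (for a given $L>0$), and $g$ is proper, lower semicontinuous and $\gamma$-strongly convex ($\gamma\ge0$). Fix an integer $K\ge1$ and $x_0\in\mathrm{dom}(g)$. Let $a_0=A_0=0$, $a_1=A_1$ with $0<a_1\le\frac1{4L}$, and $a_s>0$ for $s\ge2$, $A_s=A_{s-1}+a_s$. Let $x_{1,1}=v_{1,0}=x_0$. Let $x_{s,k}\in\mathbb{R}^d$ ($s\ge2$, $k\in[K]$) and $q_{s,k}\in\mathbb{R}^d$ be arbitrary. Define $\psi_{1,0}(u)=\frac K2\|u-x_0\|^2$,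 $\psi_{1,1}(u)=\psi_{1,0}(u)+Ka_1(f(x_0)+\langle\nabla f(x_0),u-x_0\rangle+g(u))$, $\psi_{2,0}=\psi_{1,1}$, and for $s\ge2$, $1\le k\le K$: $\psi_{s,k}(u)=\psi_{s,k-1}(u)+a_s(f(x_{s,k})+\langle q_{s,k},u-x_{s,k}\rangle+g(u))$, with $\psi_{s+1,0}=\psi_{s,K}$. Let $v_{s,k}=\arg\min_u\psi_{s,k}(u)$ (so $v_{s+1,0}=v_{s,K}$). Let $\tilde y_1=v_{1,1}$, and for $s\ge2$: $y_{s,k}=\frac{A_{s-1}}{A_s}\tilde y_{s-1}+\frac{a_s}{A_s}v_{s,k}$ for $k\in[K]$ and $\tilde y_s=\frac1K\sum_{k=1}^Ky_{s,k}$. *)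

theory Defs
  imports "HOL-Analysis.Analysis" "HOL-Library.Extended_Real"
begin

text \<open>Extended-real valued functions (value \<infinity> outside the domain).\<close>

definition proper_fun :: "('a \<Rightarrow> ereal) \<Rightarrow> bool" where
  "proper_fun g \<longleftrightarrow> (\<forall>x. g x \<noteq> -\<infinity>) \<and> (\<exists>x. g x \<noteq> \<infinity>)"

definition lsc_fun :: "('a::topological_space \<Rightarrow> ereal) \<Rightarrow> bool" where
  "lsc_fun g \<longleftrightarrow> (\<forall>c. closed {x. g x \<le> c})"

definition strongly_convex_ereal :: "real \<Rightarrow> ('a::real_normed_vector \<Rightarrow> ereal) \<Rightarrow> bool" where
  "strongly_convex_ereal \<gamma> g \<longleftrightarrow>
     (\<forall>x y t. 0 \<le> t \<and> t \<le> 1 \<longrightarrow>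
        g (t *\<^sub>R x + (1 - t) *\<^sub>R y)
          \<le> ereal t * g x + ereal (1 - t) * g y - ereal (\<gamma> / 2 * t * (1 - t) * (norm (x - y))\<^sup>2))"

end

theory Submission
  imports Defs
begin



lemma ereal_form_step:
  assumes "gw \<noteq> -\<infinity>" "c \<ge> 0" "a > 0"
  shows "(ereal P + ereal c * gw) + ereal a * (ereal l + gw) = ereal (P + a*l) + ereal (c + a) * gw"
  using assms by (cases gw) (auto simp: algebra_simps)

lemma grad_ineq:
  fixes f :: "'a::real_inner \<Rightarrow> real"
  assumes cvx: "convex_on UNIV f" and gd: "GDERIV f x :> D"
  shows "f x + inner D (u - x) \<le> f u"
proof -
  define h where "h = u - x"
  define \<phi> where "\<phi> = (\<lambda>t::real. f (x + t *\<^sub>R h))"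
  have c: "convex_on UNIV \<phi>"
  proof (rule convex_onI)
    fix t y z :: real assume t: "0 < t" "t < 1" and "y \<in> UNIV" "z \<in> UNIV"
    have e: "x + ((1 - t) *\<^sub>R y + t *\<^sub>R z) *\<^sub>R h = (1 - t) *\<^sub>R (x + y *\<^sub>R h) + t *\<^sub>R (x + z *\<^sub>R h)"
      by (simp add: algebra_simps)
    show "\<phi> ((1 - t) *\<^sub>R y + t *\<^sub>R z) \<le> (1 - t) * \<phi> y + t * \<phi> z"
      unfolding \<phi>_def e using convex_onD[OF cvx, of t "x + y *\<^sub>R h" "x + z *\<^sub>R h"] t by simp
  next
    show "convex (UNIV::real set)" by simp
  qed
  have d1: "((\<lambda>t::real. x + t *\<^sub>R h) has_derivative (\<lambda>t. t *\<^sub>R h)) (at 0)"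
    by (auto intro!: derivative_eq_intros)
  have d2: "(f has_derivative (\<lambda>k. inner k D)) (at (x + 0 *\<^sub>R h))"
    using gd by (simp add: gderiv_def)
  have "(\<phi> has_derivative (*) (inner h D)) (at 0)"
    using has_derivative_compose[OF d1 d2] unfolding \<phi>_def o_def
    by (rule has_derivative_eq_rhs) (auto simp: fun_eq_iff mult.commute)
  then have "(\<phi> has_field_derivative inner h D) (at 0)"
    by (simp add: has_field_derivative_def)
  then have "\<phi> 1 - \<phi> 0 \<ge> inner h D * (1 - 0)"
    by (intro convex_on_imp_above_tangent[OF c]) auto
  then show ?thesis by (simp add: \<phi>_def h_def inner_commute)
qed



lemma quad_id:
  fixes a b :: "'a::real_inner"
  shows "(norm (t *\<^sub>R a + (1 - t) *\<^sub>R b))\<^sup>2 = t * (norm a)\<^sup>2 + (1 - t) * (norm b)\<^sup>2 - t * (1 - t) * (norm (a - b))\<^sup>2"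
  unfolding power2_norm_eq_inner
  by (simp add: inner_diff_left inner_diff_right inner_add_left inner_add_right inner_commute algebra_simps)

lemma lim_aux:
  fixes X Y :: real
  assumes "\<And>t. 0 < t \<Longrightarrow> t < 1 \<Longrightarrow> (1 - t) * Y \<le> X"
  shows "Y \<le> X"
proof (rule ccontr)
  assume "\<not> Y \<le> X"
  then have YX: "X < Y" by simp
  have "Y/2 \<le> X" using assms[of "1/2"] by simp
  with YX have Yp: "Y > 0" by linarith
  define t where "t = min (1/2) ((Y - X) / (2 * Y))"
  have t0: "0 < t" using YX Yp by (simp add: t_def)
  have t1: "t < 1" by (simp add: t_def)
  have "t \<le> (Y - X) / (2 * Y)" by (simp add: t_def)
  then have "t * Y \<le> (Y - X) / (2 * Y) * Y" using Yp by (intro mult_right_mono) auto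
  also have "\<dots> = (Y - X) / 2" using Yp by (simp add: field_simps)
  finally have tY: "t * Y \<le> (Y - X) / 2" .
  have e: "(1 - t) * Y = Y - t * Y" by (simp add: algebra_simps)
  have "Y - t * Y \<le> X" using assms[OF t0 t1] unfolding e .
  with tY YX show False by argo
qed

lemma sc_min:
  fixes g :: "'a::real_inner \<Rightarrow> ereal"
  assumes g_sc: "strongly_convex_ereal \<gamma> g" and ninf: "\<And>w. g w \<noteq> -\<infinity>"
    and c0: "c \<ge> 0"
    and \<psi>: "\<And>w. \<psi> w = ereal (K/2*(norm(w-x0))\<^sup>2 + inner p w + c0) + ereal c * g w"
    and mn: "\<And>w. \<psi> v \<le> \<psi> w" and gv: "g v \<noteq> \<infinity>" and gw: "g w \<noteq> \<infinity>"
  shows "real_of_ereal (\<psi> v) + (K + c*\<gamma>)/2 * (norm (w-v))\<^sup>2 \<le> real_of_ereal (\<psi> w)"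
proof -
  obtain Gv where Gv: "g v = ereal Gv" using gv ninf[of v] by (cases "g v") auto
  obtain Gw where Gw: "g w = ereal Gw" using gw ninf[of w] by (cases "g w") auto
  define Q where "Q z = K/2*(norm(z-x0))\<^sup>2 + inner p z + c0" for z
  have pv: "\<psi> v = ereal (Q v + c * Gv)" using \<psi>[of v] Gv by (simp add: Q_def)
  have pw: "\<psi> w = ereal (Q w + c * Gw)" using \<psi>[of w] Gw by (simp add: Q_def)
  define d where "d = (norm (w - v))\<^sup>2"
  have key: "(1 - t) * ((K + c*\<gamma>)/2 * d) \<le> (Q w + c * Gw) - (Q v + c * Gv)"
    if t: "0 < t" "t < 1" for t
  proof -
    define z where "z = t *\<^sub>R w + (1 - t) *\<^sub>R v"
    have "g z \<le> ereal t * g w + ereal (1 - t) * g v - ereal (\<gamma> / 2 * t * (1 - t) * (norm (w - v))\<^sup>2)"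
      using g_sc t unfolding strongly_convex_ereal_def z_def by auto
    also have "\<dots> = ereal (t * Gw + (1 - t) * Gv - \<gamma> / 2 * t * (1 - t) * d)"
      by (simp add: Gv Gw d_def)
    finally have gz: "g z \<le> ereal (t * Gw + (1 - t) * Gv - \<gamma> / 2 * t * (1 - t) * d)" .
    then obtain Gz where Gz: "g z = ereal Gz" using ninf[of z] by (cases "g z") auto
    with gz have Gzle: "Gz \<le> t * Gw + (1 - t) * Gv - \<gamma> / 2 * t * (1 - t) * d" by simp
    have "z - x0 = t *\<^sub>R (w - x0) + (1 - t) *\<^sub>R (v - x0)"
      by (simp add: z_def algebra_simps)
    then have nz: "(norm (z - x0))\<^sup>2 = t * (norm (w - x0))\<^sup>2 + (1 - t) * (norm (v - x0))\<^sup>2 - t * (1 - t) * d"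
      by (simp add: quad_id d_def)
    have iz: "inner p z = t * inner p w + (1 - t) * inner p v"
      by (simp add: z_def inner_simps)
    have Qz: "Q z = t * Q w + (1 - t) * Q v - K/2 * t * (1 - t) * d"
      unfolding Q_def nz iz by (simp add: field_simps)
    have "\<psi> v \<le> \<psi> z" by (rule mn)
    then have "Q v + c * Gv \<le> Q z + c * Gz" using \<psi>[of z] Gz pv by (simp add: Q_def)
    also have "\<dots> \<le> Q z + c * (t * Gw + (1 - t) * Gv - \<gamma> / 2 * t * (1 - t) * d)"
      using Gzle c0 by (simp add: mult_left_mono)
    finally have "Q v + c * Gv \<le> t * Q w + (1 - t) * Q v - K/2 * t * (1 - t) * d + c * (t * Gw + (1 - t) * Gv - \<gamma> / 2 * t * (1 - t) * d)"
      unfolding Qz .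
    then have "t * ((1 - t) * ((K + c*\<gamma>)/2 * d)) \<le> t * ((Q w + c * Gw) - (Q v + c * Gv))"
      by (simp add: algebra_simps add_divide_distrib diff_divide_distrib)
    then show ?thesis using t by simp
  qed
  have "(K + c*\<gamma>)/2 * d \<le> (Q w + c * Gw) - (Q v + c * Gv)"
    by (rule lim_aux) (use key in auto)
  then show ?thesis by (simp add: pv pw d_def)
qed


lemma frm_step:
  fixes g :: "'a::real_inner \<Rightarrow> ereal"
  assumes "\<And>w. \<psi>' w = ereal (K/2*(norm(w-x0))\<^sup>2 + inner p w + c0) + ereal c * g w"
    and "\<And>w. g w \<noteq> -\<infinity>" and "c \<ge> 0" and "a > 0"
    and "\<And>w. \<psi>'' w = \<psi>' w + ereal a * (ereal (fx + inner q (w - xx)) + g w)"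
  shows "\<exists>p c0. \<forall>w. \<psi>'' w = ereal (K/2*(norm(w-x0))\<^sup>2 + inner p w + c0) + ereal (c + a) * g w"
proof (intro exI allI)
  fix w
  show "\<psi>'' w = ereal (K/2*(norm(w-x0))\<^sup>2 + inner (p + a *\<^sub>R q) w + (c0 + a * (fx - inner q xx))) + ereal (c + a) * g w"
  proof -
    have e: "\<psi>'' w = ereal ((K/2*(norm(w-x0))\<^sup>2 + inner p w + c0) + a * (fx + inner q (w - xx))) + ereal (c + a) * g w"
      unfolding assms(5) assms(1) by (rule ereal_form_step[OF assms(2) assms(3) assms(4)])
    have eq: "(K/2*(norm(w-x0))\<^sup>2 + inner p w + c0) + a * (fx + inner q (w - xx)) = K/2*(norm(w-x0))\<^sup>2 + inner (p + a *\<^sub>R q) w + (c0 + a * (fx - inner q xx))"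
      by (simp add: inner_simps algebra_simps)
    from e show ?thesis unfolding eq .
  qed
qed

theorem lemma5:
  fixes f :: "'a::euclidean_space \<Rightarrow> real"
    and df :: "'a \<Rightarrow> 'a"
    and g :: "'a \<Rightarrow> ereal"
    and L \<gamma> :: real
    and K S :: nat
    and x0 u :: 'a
    and a A :: "nat \<Rightarrow> real"
    and x q v y :: "nat \<Rightarrow> nat \<Rightarrow> 'a"
    and yt :: "nat \<Rightarrow> 'a"
    and \<psi> :: "nat \<Rightarrow> nat \<Rightarrow> 'a \<Rightarrow> ereal"
  assumes f_convex: "convex_on UNIV f"
    and f_grad: "\<And>z. GDERIV f z :> df z"
    and df_cont: "continuous_on UNIV df"
    and L_pos: "L > 0"
    and f_smooth: "\<And>z w. f w \<le> f z + inner (df z) (w - z) + L / 2 * (norm (w - z))\<^sup>2"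
    and g_proper: "proper_fun g"
    and g_lsc: "lsc_fun g"
    and \<gamma>_nonneg: "\<gamma> \<ge> 0"
    and g_sc: "strongly_convex_ereal \<gamma> g"
    and K_ge: "K \<ge> 1"
    and x0_dom: "g x0 \<noteq> \<infinity>"
    and a0: "a 0 = 0"
    and a1_pos: "0 < a 1" and a1_le: "a 1 \<le> 1 / (4 * L)"
    and a_pos: "\<And>s. s \<ge> 2 \<Longrightarrow> a s > 0"
    and A0: "A 0 = 0"
    and A_rec: "\<And>s. s \<ge> 1 \<Longrightarrow> A s = A (s - 1) + a s"
    and x11: "x 1 1 = x0"
    and v10: "v 1 0 = x0"
    and psi10: "\<And>w. \<psi> 1 0 w = ereal (real K / 2 * (norm (w - x0))\<^sup>2)"
    and psi11: "\<And>w. \<psi> 1 1 w = \<psi> 1 0 w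
                 + ereal (real K * a 1) * (ereal (f x0 + inner (df x0) (w - x0)) + g w)"
    and psi20: "\<And>w. \<psi> 2 0 w = \<psi> 1 1 w"
    and psi_step: "\<And>s k w. s \<ge> 2 \<Longrightarrow> 1 \<le> k \<Longrightarrow> k \<le> K \<Longrightarrow>
                 \<psi> s k w = \<psi> s (k - 1) w
                   + ereal (a s) * (ereal (f (x s k) + inner (q s k) (w - x s k)) + g w)"
    and psi_next: "\<And>s w. s \<ge> 2 \<Longrightarrow> \<psi> (s + 1) 0 w = \<psi> s K w"
    and v_min1: "\<And>k w. k \<le> 1 \<Longrightarrow> \<psi> 1 k (v 1 k) \<le> \<psi> 1 k w"
    and v_min: "\<And>s k w. s \<ge> 2 \<Longrightarrow> k \<le> K \<Longrightarrow> \<psi> s k (v s k) \<le> \<psi> s k w"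
    and yt1: "yt 1 = v 1 1"
    and y_def: "\<And>s k. s \<ge> 2 \<Longrightarrow> 1 \<le> k \<Longrightarrow> k \<le> K \<Longrightarrow>
                 y s k = (A (s - 1) / A s) *\<^sub>R yt (s - 1) + (a s / A s) *\<^sub>R v s k"
    and yt_def: "\<And>s. s \<ge> 2 \<Longrightarrow> yt s = (1 / real K) *\<^sub>R (\<Sum>k = 1..K. y s k)"
    and S_ge: "S \<ge> 2"
  shows "ereal (real K * A S) * ((ereal (f (yt S)) + g (yt S)) - (ereal (f u) + g u))
         \<le> ereal (real K / 2 * (norm (x0 - u))\<^sup>2
                  - real K * (1 + A S * \<gamma>) / 2 * (norm (v S K - u))\<^sup>2
                  - real K / 4 * (norm (v 1 1 - v 1 0))\<^sup>2
                  + (\<Sum>s = 2..S. \<Sum>k = 1..K.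
                       A s * (f (y s k) - f (x s k))
                       - A (s - 1) * (f (yt (s - 1)) - f (x s k))
                       + a s * inner (df (x s k) - q s k) (x s k - u)
                       + a s * inner (q s k) (x s k - v s k)
                       - real K * (1 + A (s - 1) * \<gamma>) / 2 * (norm (v s k - v s (k - 1)))\<^sup>2))"
proof -
  define G where "G w = real_of_ereal (g w)" for w
  define D where "D = {w. g w \<noteq> \<infinity>}"
  define F where "F w = f w + G w" for w
  define \<Phi> where "\<Phi> s k w = real_of_ereal (\<psi> s k w)" for s k w
  define lin where "lin s k w = f (x s k) + inner (q s k) (w - x s k) + G w" for s k w
  define frm where "frm c \<psi>' \<longleftrightarrow> (\<exists>p c0. \<forall>w. \<psi>' w = ereal (real K/2*(norm(w-x0))\<^sup>2 + inner p w + c0) + ereal c * g w)" for c \<psi>'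
  define \<mu> where "\<mu> s = real K * (1 + A (s - 1) * \<gamma>)" for s
  have Kpos: "real K > 0" using K_ge by simp
  have ninf: "\<And>w. g w \<noteq> -\<infinity>" using g_proper by (simp add: proper_fun_def)
  have gD: "g w = ereal (G w)" if "w \<in> D" for w
    using that ninf[of w] by (cases "g w") (auto simp: D_def G_def)
  have x0D: "x0 \<in> D" using x0_dom by (simp add: D_def)
  have cvx2: "t *\<^sub>R w1 + (1 - t) *\<^sub>R w2 \<in> D \<and> G (t *\<^sub>R w1 + (1 - t) *\<^sub>R w2) \<le> t * G w1 + (1 - t) * G w2"
    if "w1 \<in> D" "w2 \<in> D" "0 \<le> t" "t \<le> 1" for w1 w2 t
  proof -
    have "g (t *\<^sub>R w1 + (1 - t) *\<^sub>R w2) \<le> ereal t * g w1 + ereal (1 - t) * g w2 - ereal (\<gamma> / 2 * t * (1 - t) * (norm (w1 - w2))\<^sup>2)"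
      using g_sc that unfolding strongly_convex_ereal_def by auto
    also have "\<dots> = ereal (t * G w1 + (1 - t) * G w2 - \<gamma> / 2 * t * (1 - t) * (norm (w1 - w2))\<^sup>2)"
      using that by (simp add: gD)
    also have "\<dots> \<le> ereal (t * G w1 + (1 - t) * G w2)"
    proof -
      have "0 \<le> \<gamma> / 2 * t * (1 - t) * (norm (w1 - w2))\<^sup>2"
        using that \<gamma>_nonneg by (intro mult_nonneg_nonneg) auto
      then show ?thesis by simp
    qed
    finally have le: "g (t *\<^sub>R w1 + (1 - t) *\<^sub>R w2) \<le> ereal (t * G w1 + (1 - t) * G w2)" .
    then have "t *\<^sub>R w1 + (1 - t) *\<^sub>R w2 \<in> D" by (auto simp: D_def)
    with le show ?thesis by (simp add: gD)
  qed
  have Dc: "convex D"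
  proof (rule convexI)
    fix w1 w2 and t1 t2 :: real assume h: "w1 \<in> D" "w2 \<in> D" "0 \<le> t1" "0 \<le> t2" "t1 + t2 = 1"
    then have "t2 = 1 - t1" by simp
    with h cvx2[of w1 w2 t1] show "t1 *\<^sub>R w1 + t2 *\<^sub>R w2 \<in> D" by simp
  qed
  have Gc: "convex_on D G"
    unfolding convex_on_def
  proof (intro conjI ballI allI impI Dc)
    fix w1 w2 and t1 t2 :: real assume h: "w1 \<in> D" "w2 \<in> D" "0 \<le> t1" "0 \<le> t2" "t1 + t2 = 1"
    then have "t2 = 1 - t1" by simp
    with h cvx2[of w1 w2 t1] show "G (t1 *\<^sub>R w1 + t2 *\<^sub>R w2) \<le> t1 * G w1 + t2 * G w2" by simp
  qed
  have apos: "a s > 0" if "s \<ge> 1" for s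
    using a1_pos a_pos[of s] that by (cases "s = 1") auto
  have A1: "A 1 = a 1" using A_rec[of 1] A0 by simp
  have Apos: "A s > 0" if "s \<ge> 1" for s
    using that
  proof (induct s rule: nat_induct_at_least)
    case base then show ?case using A1 a1_pos by simp
  next
    case (Suc n) then show ?case using A_rec[of "Suc n"] apos[of "Suc n"] by simp
  qed
  have Anneg: "A s \<ge> 0" for s
    using Apos[of s] A0 by (cases s) auto
  have Astep: "A s = A (s - 1) + a s" if "s \<ge> 1" for s using A_rec that .
  have frm10: "frm 0 (\<psi> 1 0)"
    unfolding frm_def
  proof (intro exI allI)
    fix w
    show "\<psi> 1 0 w = ereal (real K/2*(norm(w-x0))\<^sup>2 + inner 0 w + 0) + ereal 0 * g w"
      using psi10[of w] by (simp add: zero_ereal_def[symmetric])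
  qed
  have frm11: "frm (real K * a 1) (\<psi> 1 1)"
  proof -
    from frm10 obtain p c0 where h: "\<And>w. \<psi> 1 0 w = ereal (real K/2*(norm(w-x0))\<^sup>2 + inner p w + c0) + ereal 0 * g w"
      unfolding frm_def by blast
    have "\<exists>p c0. \<forall>w. \<psi> 1 1 w = ereal (real K/2*(norm(w-x0))\<^sup>2 + inner p w + c0) + ereal (0 + real K * a 1) * g w"
      by (rule frm_step[OF h ninf, where fx="f x0" and q="df x0" and xx=x0])
        (use Kpos a1_pos psi11 in auto)
    then show ?thesis unfolding frm_def by simp
  qed
  have kstep: "frm (c + real k * a s) (\<psi> s k)" if "s \<ge> 2" "k \<le> K" "c \<ge> 0" "frm c (\<psi> s 0)" for s k c
    using that(2)
  proof (induct k)
    case 0 then show ?case using that(4) by simp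
  next
    case (Suc k)
    then have IH: "frm (c + real k * a s) (\<psi> s k)" by simp
    then obtain p c0 where h: "\<And>w. \<psi> s k w = ereal (real K/2*(norm(w-x0))\<^sup>2 + inner p w + c0) + ereal (c + real k * a s) * g w"
      unfolding frm_def by blast
    have as: "a s > 0" using apos that(1) by simp
    have cn: "0 \<le> c + real k * a s" using that(3) as by simp
    have "\<exists>p c0. \<forall>w. \<psi> s (Suc k) w = ereal (real K/2*(norm(w-x0))\<^sup>2 + inner p w + c0) + ereal ((c + real k * a s) + a s) * g w"
      by (rule frm_step[OF h ninf cn as, where fx="f (x s (Suc k))" and q="q s (Suc k)" and xx="x s (Suc k)"])
        (use that Suc.prems psi_step[of s "Suc k"] in auto)
    then show ?case unfolding frm_def by (simp add: algebra_simps)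
  qed
  have frm_s0: "frm (real K * A (s - 1)) (\<psi> s 0)" if "s \<ge> 2" for s
    using that
  proof (induct s rule: nat_induct_at_least)
    case base then show ?case using frm11 A1 psi20 by (simp add: frm_def)
  next
    case (Suc n)
    have "frm (real K * A (n - 1) + real K * a n) (\<psi> n K)"
      by (rule kstep) (use Suc Anneg in auto)
    moreover have "real K * A (n - 1) + real K * a n = real K * A (Suc n - 1)"
      using Astep[of n] Suc by (simp add: algebra_simps)
    ultimately show ?case using psi_next[of n] Suc by (simp add: frm_def)
  qed
  have frm_s: "frm (real K * A (s - 1) + real k * a s) (\<psi> s k)" if "s \<ge> 2" "k \<le> K" for s k
    by (rule kstep) (use that frm_s0 Anneg in auto)
  have cpos: "0 < real K * A (s - 1) + real k * a s" if "s \<ge> 2" for s k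
  proof -
    have "0 < real K * A (s - 1)" using Kpos Apos[of "s - 1"] that by simp
    moreover have "0 \<le> real k * a s" using apos[of s] that by simp
    ultimately show ?thesis by linarith
  qed
  have frm_fin: "\<psi>' w = ereal (real_of_ereal (\<psi>' w))" if "frm c \<psi>'" "w \<in> D" for c \<psi>' w
    using that gD[of w] unfolding frm_def by auto
  have frm_min: "v' \<in> D" if "frm c \<psi>'" "c > 0" "\<psi>' v' \<le> \<psi>' x0" for c \<psi>' v'
  proof (rule ccontr)
    assume "v' \<notin> D"
    then have "g v' = \<infinity>" by (simp add: D_def)
    then have "\<psi>' v' = \<infinity>" using that(1,2) unfolding frm_def by auto
    moreover have "\<psi>' x0 \<noteq> \<infinity>" by (subst frm_fin[OF that(1) x0D]) simp
    ultimately show False using that(3) by simp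
  qed
  have scm: "real_of_ereal (\<psi>' v') + (real K + c * \<gamma>)/2 * (norm (w - v'))\<^sup>2 \<le> real_of_ereal (\<psi>' w)"
    if "frm c \<psi>'" "c \<ge> 0" "\<And>w. \<psi>' v' \<le> \<psi>' w" "v' \<in> D" "w \<in> D" for c \<psi>' v' w
  proof -
    from that(1) obtain p c0 where h: "\<And>w. \<psi>' w = ereal (real K/2*(norm(w-x0))\<^sup>2 + inner p w + c0) + ereal c * g w"
      unfolding frm_def by blast
    show ?thesis
      by (rule sc_min[OF g_sc ninf that(2) h that(3)]) (use that(4,5) in \<open>auto simp: D_def\<close>)
  qed
  have vD: "v s k \<in> D" if "s \<ge> 2" "k \<le> K" for s k
  proof (rule frm_min[OF frm_s[OF that]])
    show "0 < real K * A (s - 1) + real k * a s" using cpos that by simp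
    show "\<psi> s k (v s k) \<le> \<psi> s k x0" using v_min that by simp
  qed
  have v11D: "v 1 1 \<in> D"
    by (rule frm_min[OF frm11]) (use Kpos a1_pos v_min1[of 1] in auto)
  have Phi_step: "\<Phi> s k w = \<Phi> s (k - 1) w + a s * lin s k w" if "s \<ge> 2" "1 \<le> k" "k \<le> K" "w \<in> D" for s k w
  proof -
    have e: "\<psi> s (k - 1) w = ereal (\<Phi> s (k - 1) w)"
      unfolding \<Phi>_def by (rule frm_fin[OF frm_s]) (use that in auto)
    have "\<psi> s k w = ereal (\<Phi> s (k - 1) w + a s * lin s k w)"
      using psi_step[OF that(1-3), of w] e gD[OF that(4)] by (simp add: lin_def)
    then show ?thesis by (simp add: \<Phi>_def)
  qed
  have Phi11: "\<Phi> 1 1 w = real K/2*(norm(w-x0))\<^sup>2 + real K * a 1 * (f x0 + inner (df x0) (w - x0) + G w)" if "w \<in> D" for w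
    using psi11[of w] psi10[of w] gD[OF that] by (simp add: \<Phi>_def)
  have Phi20: "\<Phi> 2 0 w = \<Phi> 1 1 w" for w using psi20 by (simp add: \<Phi>_def)
  have Phinext: "\<Phi> (Suc s) 0 w = \<Phi> s K w" if "s \<ge> 2" for s w using psi_next[OF that] by (simp add: \<Phi>_def)
  have W2: "\<Phi> 2 0 (v 2 0) = \<Phi> 1 1 (v 1 1)"
  proof -
    have "\<psi> 2 0 (v 2 0) \<le> \<psi> 2 0 (v 1 1)" using v_min[of 2 0] by simp
    moreover have "\<psi> 1 1 (v 1 1) \<le> \<psi> 1 1 (v 2 0)" using v_min1[of 1] by simp
    ultimately have "\<psi> 2 0 (v 2 0) = \<psi> 1 1 (v 1 1)" using psi20 by (metis antisym)
    then show ?thesis by (simp add: \<Phi>_def)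
  qed
  have Wnext: "\<Phi> (Suc s) 0 (v (Suc s) 0) = \<Phi> s K (v s K)" if "s \<ge> 2" for s
  proof -
    have "\<psi> (Suc s) 0 (v (Suc s) 0) \<le> \<psi> (Suc s) 0 (v s K)" using v_min[of "Suc s" 0] that by simp
    moreover have "\<psi> s K (v s K) \<le> \<psi> s K (v (Suc s) 0)" using v_min[of s K] that by simp
    ultimately have "\<psi> (Suc s) 0 (v (Suc s) 0) = \<psi> s K (v s K)" using psi_next[OF that] by (metis Suc_eq_plus1 antisym)
    then show ?thesis by (simp add: \<Phi>_def)
  qed
  have lchain: "\<Phi> s 0 (v s 0) + (\<Sum>j = 1..k. \<mu> s / 2 * (norm (v s j - v s (j - 1)))\<^sup>2 + a s * lin s j (v s j)) \<le> \<Phi> s k (v s k)"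
    if "s \<ge> 2" "k \<le> K" for s k
    using that(2)
  proof (induct k)
    case 0 then show ?case by simp
  next
    case (Suc k)
    have kle: "k \<le> K" using Suc.prems by simp
    have IH: "\<Phi> s 0 (v s 0) + (\<Sum>j = 1..k. \<mu> s / 2 * (norm (v s j - v s (j - 1)))\<^sup>2 + a s * lin s j (v s j)) \<le> \<Phi> s k (v s k)"
      using Suc kle by simp
    define c where "c = real K * A (s - 1) + real k * a s"
    have cnn: "0 \<le> c" using cpos[OF that(1), of k] by (simp add: c_def)
    have sc: "\<Phi> s k (v s k) + (real K + c * \<gamma>)/2 * (norm (v s (Suc k) - v s k))\<^sup>2 \<le> \<Phi> s k (v s (Suc k))"
      unfolding \<Phi>_def c_def
      by (rule scm[OF frm_s[OF that(1) kle] cpos[OF that(1), THEN less_imp_le] v_min[OF that(1) kle] vD[OF that(1) kle] vD[OF that(1) Suc.prems]])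
    have mu: "\<mu> s / 2 * (norm (v s (Suc k) - v s k))\<^sup>2 \<le> (real K + c * \<gamma>)/2 * (norm (v s (Suc k) - v s k))\<^sup>2"
    proof -
      have "real K * A (s - 1) * \<gamma> \<le> c * \<gamma>"
        using \<gamma>_nonneg apos[of s] that(1) by (intro mult_right_mono) (auto simp: c_def)
      then have "\<mu> s \<le> real K + c * \<gamma>" by (simp add: \<mu>_def algebra_simps)
      then show ?thesis by (intro mult_right_mono) auto
    qed
    have st: "\<Phi> s (Suc k) (v s (Suc k)) = \<Phi> s k (v s (Suc k)) + a s * lin s (Suc k) (v s (Suc k))"
      using Phi_step[OF that(1) _ Suc.prems vD[OF that(1) Suc.prems]] by simp
    show ?case using IH sc mu st by (simp add: sum.cl_ivl_Suc)
  qed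
  have uchain: "\<Phi> s k w = \<Phi> s 0 w + (\<Sum>j = 1..k. a s * lin s j w)"
    if "s \<ge> 2" "k \<le> K" "w \<in> D" for s k w
    using that(2)
  proof (induct k)
    case 0 then show ?case by simp
  next
    case (Suc k)
    then show ?case using Phi_step[OF that(1) _ Suc.prems that(3)] by (simp add: sum.cl_ivl_Suc)
  qed
  have uchain2: "\<Phi> (Suc s) 0 w = \<Phi> 1 1 w + (\<Sum>s' = 2..s. \<Sum>j = 1..K. a s' * lin s' j w)"
    if "s \<ge> 1" "w \<in> D" for s w
    using that(1)
  proof (induct s rule: nat_induct_at_least)
    case base then show ?case using Phi20[of w] by (simp add: numeral_2_eq_2)
  next
    case (Suc n)
    have "\<Phi> (Suc (Suc n)) 0 w = \<Phi> (Suc n) K w" using Phinext[of "Suc n"] Suc by simp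
    also have "\<dots> = \<Phi> (Suc n) 0 w + (\<Sum>j = 1..K. a (Suc n) * lin (Suc n) j w)"
      using uchain[of "Suc n" K w] Suc that(2) by simp
    finally show ?case using Suc by (simp add: sum.cl_ivl_Suc)
  qed
  define T where "T s k = A s * (f (y s k) - f (x s k))
                       - A (s - 1) * (f (yt (s - 1)) - f (x s k))
                       + a s * inner (q s k) (x s k - v s k)
                       - real K * (1 + A (s - 1) * \<gamma>) / 2 * (norm (v s k - v s (k - 1)))\<^sup>2" for s k
  define LB where "LB s = real K * A s * F (yt s) + real K / 4 * (norm (v 1 1 - v 1 0))\<^sup>2
                          - (\<Sum>s' = 2..s. \<Sum>k = 1..K. T s' k)" for s
  have lower: "LB s \<le> \<Phi> (Suc s) 0 (v (Suc s) 0) \<and> yt s \<in> D" if "s \<ge> 1" for s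
    using that
  proof (induct s rule: nat_induct_at_least)
    case base
    define n2 where "n2 = (norm (v 1 1 - x0))\<^sup>2"
    define M where "M = real K * a 1 * L * n2"
    have sm: "f (v 1 1) \<le> f x0 + inner (df x0) (v 1 1 - x0) + L / 2 * n2"
      using f_smooth[where z=x0 and w="v 1 1"] by (simp add: n2_def)
    have Ka: "0 \<le> real K * a 1" using Kpos a1_pos by simp
    have "real K * a 1 * f (v 1 1) \<le> real K * a 1 * (f x0 + inner (df x0) (v 1 1 - x0) + L / 2 * n2)"
      using sm Ka by (intro mult_left_mono) auto
    also have "\<dots> = real K * a 1 * (f x0 + inner (df x0) (v 1 1 - x0)) + M / 2"
      by (simp add: M_def field_simps)
    finally have h1: "real K * a 1 * f (v 1 1) \<le> real K * a 1 * (f x0 + inner (df x0) (v 1 1 - x0)) + M / 2" .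
    have aL: "a 1 * L \<le> 1/4" using a1_le L_pos by (simp add: field_simps)
    have N0: "0 \<le> real K * n2" using Kpos by (simp add: n2_def)
    have "(a 1 * L) * (real K * n2) \<le> 1/4 * (real K * n2)"
      using aL N0 by (intro mult_right_mono) auto
    moreover have "(a 1 * L) * (real K * n2) = M" by (simp add: M_def)
    ultimately have h2: "M \<le> real K * n2 / 4" by simp
    have e1: "real K * a 1 * (f (v 1 1) + G (v 1 1)) = real K * a 1 * f (v 1 1) + real K * a 1 * G (v 1 1)"
      by (simp add: algebra_simps)
    have e2: "real K * a 1 * (f x0 + inner (df x0) (v 1 1 - x0) + G (v 1 1))
        = real K * a 1 * (f x0 + inner (df x0) (v 1 1 - x0)) + real K * a 1 * G (v 1 1)"
      by (simp add: algebra_simps)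
    have e3: "real K / 4 * n2 = real K * n2 / 4" "real K / 2 * n2 = real K * n2 / 2" by simp_all
    have "LB 1 = real K * a 1 * (f (v 1 1) + G (v 1 1)) + real K / 4 * n2"
      using A1 yt1 v10 by (simp add: LB_def F_def n2_def)
    also have "\<dots> \<le> \<Phi> 1 1 (v 1 1)"
      unfolding Phi11[OF v11D] n2_def[symmetric] e1 e2 e3 using h1 h2 N0 by linarith
    finally show ?case using W2 yt1 v11D by (simp add: numeral_2_eq_2)
  next
    case (Suc s)
    define n where "n = Suc s"
    have n2: "n \<ge> 2" using Suc by (simp add: n_def)
    have sn: "n - 1 = s" by (simp add: n_def)
    have IH: "LB s \<le> \<Phi> n 0 (v n 0)" "yt s \<in> D" using Suc by (simp_all add: n_def)
    have An: "A n = A s + a n" using Astep[of n] n2 sn by simp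
    have anp: "a n > 0" using apos n2 by simp
    have Anp: "A n > 0" using Apos n2 by simp
    have Asnn: "A s \<ge> 0" using Anneg by simp
    have c1: "1 - A s / A n = a n / A n" using An Anp by (simp add: field_simps)
    have t01: "0 \<le> A s / A n" "A s / A n \<le> 1" using Asnn Anp An anp by (auto simp: field_simps)
    have yk: "y n k \<in> D \<and> A n * G (y n k) \<le> A s * G (yt s) + a n * G (v n k)" if "k \<in> {1..K}" for k
    proof -
      have vnk: "v n k \<in> D" using vD[of n k] n2 that by simp
      have yeq: "y n k = (A s / A n) *\<^sub>R yt s + (1 - A s / A n) *\<^sub>R v n k"
        unfolding c1 using y_def[of n k] n2 that sn by simp
      have cv: "y n k \<in> D \<and> G (y n k) \<le> A s / A n * G (yt s) + (1 - A s / A n) * G (v n k)"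
        unfolding yeq by (rule cvx2[OF IH(2) vnk t01])
      have "A n * G (y n k) \<le> A n * (A s / A n * G (yt s) + (1 - A s / A n) * G (v n k))"
        using cv Anp by (intro mult_left_mono) auto
      also have "A n * (A s / A n * G (yt s) + (1 - A s / A n) * G (v n k)) = A s * G (yt s) + a n * G (v n k)"
        unfolding c1 using Anp by (simp add: field_simps)
      finally show ?thesis using cv by simp
    qed
    have ytsum: "yt n = (\<Sum>k\<in>{1..K}. (1 / real K) *\<^sub>R y n k)"
      using yt_def[OF n2] by (simp add: scaleR_sum_right)
    have wsum: "(\<Sum>k\<in>{1..K}. 1 / real K) = 1" using Kpos by simp
    have ytnD: "yt n \<in> D"
      unfolding ytsum by (rule convex_sum[OF _ Dc wsum]) (use yk in auto)
    have J1: "f (yt n) \<le> (\<Sum>k\<in>{1..K}. 1 / real K * f (y n k))"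
      unfolding ytsum by (rule convex_on_sum[OF _ _ f_convex wsum]) (use K_ge in auto)
    have J2: "G (yt n) \<le> (\<Sum>k\<in>{1..K}. 1 / real K * G (y n k))"
      unfolding ytsum by (rule convex_on_sum[OF _ _ Gc wsum]) (use K_ge yk in auto)
    have sd: "(\<Sum>k\<in>{1..K}. 1 / real K * h k) = 1 / real K * (\<Sum>k\<in>{1..K}. h k)" for h :: "nat \<Rightarrow> real"
      by (simp add: sum_distrib_left)
    have Kinv: "real K * (1 / real K * X) = X" for X using Kpos by simp
    have Kf: "real K * f (yt n) \<le> (\<Sum>k\<in>{1..K}. f (y n k))"
    proof -
      have "real K * f (yt n) \<le> real K * (1 / real K * (\<Sum>k\<in>{1..K}. f (y n k)))"
        using J1[unfolded sd] Kpos by (intro mult_left_mono) auto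
      then show ?thesis unfolding Kinv .
    qed
    have KG: "real K * G (yt n) \<le> (\<Sum>k\<in>{1..K}. G (y n k))"
    proof -
      have "real K * G (yt n) \<le> real K * (1 / real K * (\<Sum>k\<in>{1..K}. G (y n k)))"
        using J2[unfolded sd] Kpos by (intro mult_left_mono) auto
      then show ?thesis unfolding Kinv .
    qed
    have KF: "real K * A n * F (yt n) \<le> (\<Sum>k\<in>{1..K}. A n * f (y n k) + A n * G (y n k))"
    proof -
      have "real K * A n * F (yt n) = A n * (real K * f (yt n)) + A n * (real K * G (yt n))"
        by (simp add: F_def algebra_simps)
      also have "\<dots> \<le> A n * (\<Sum>k\<in>{1..K}. f (y n k)) + A n * (\<Sum>k\<in>{1..K}. G (y n k))"
      proof (rule add_mono)
        show "A n * (real K * f (yt n)) \<le> A n * (\<Sum>k\<in>{1..K}. f (y n k))"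
          using Kf Anp by (intro mult_left_mono) auto
        show "A n * (real K * G (yt n)) \<le> A n * (\<Sum>k\<in>{1..K}. G (y n k))"
          using KG Anp by (intro mult_left_mono) auto
      qed
      also have "\<dots> = (\<Sum>k\<in>{1..K}. A n * f (y n k) + A n * G (y n k))"
        by (simp add: sum.distrib sum_distrib_left)
      finally show ?thesis .
    qed
    have perk: "A n * f (y n k) + A n * G (y n k) - T n k
        \<le> A s * F (yt s) + (\<mu> n / 2 * (norm (v n k - v n (k - 1)))\<^sup>2 + a n * lin n k (v n k))"
      if "k \<in> {1..K}" for k
    proof -
      have g1: "A n * G (y n k) \<le> A s * G (yt s) + a n * G (v n k)" using yk[OF that] by simp
      have eqT: "A n * f (y n k) + A n * G (y n k) - T n k
          = A n * G (y n k) + a n * f (x n k) + A s * f (yt s) + a n * inner (q n k) (v n k - x n k)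
            + \<mu> n / 2 * (norm (v n k - v n (k - 1)))\<^sup>2"
        using sn by (simp add: T_def \<mu>_def An inner_diff_right algebra_simps)
      have eqR: "A s * F (yt s) + (\<mu> n / 2 * (norm (v n k - v n (k - 1)))\<^sup>2 + a n * lin n k (v n k))
          = A s * f (yt s) + A s * G (yt s) + \<mu> n / 2 * (norm (v n k - v n (k - 1)))\<^sup>2
            + a n * f (x n k) + a n * inner (q n k) (v n k - x n k) + a n * G (v n k)"
        by (simp add: F_def lin_def algebra_simps)
      show ?thesis unfolding eqT eqR using g1 by linarith
    qed
    have sumT: "(\<Sum>k\<in>{1..K}. A n * f (y n k) + A n * G (y n k) - T n k)
        = (\<Sum>k\<in>{1..K}. A n * f (y n k) + A n * G (y n k)) - (\<Sum>k = 1..K. T n k)"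
      by (simp add: sum_subtractf)
    have sumP: "(\<Sum>k\<in>{1..K}. A n * f (y n k) + A n * G (y n k) - T n k)
        \<le> (\<Sum>k\<in>{1..K}. A s * F (yt s) + (\<mu> n / 2 * (norm (v n k - v n (k - 1)))\<^sup>2 + a n * lin n k (v n k)))"
      by (rule sum_mono) (rule perk)
    have sumC: "(\<Sum>k\<in>{1..K}. A s * F (yt s) + (\<mu> n / 2 * (norm (v n k - v n (k - 1)))\<^sup>2 + a n * lin n k (v n k)))
        = real K * A s * F (yt s) + (\<Sum>k = 1..K. \<mu> n / 2 * (norm (v n k - v n (k - 1)))\<^sup>2 + a n * lin n k (v n k))"
      by (simp add: sum.distrib)
    have LBn: "LB n = real K * A n * F (yt n) + real K / 4 * (norm (v 1 1 - v 1 0))\<^sup>2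
                - (\<Sum>s' = 2..s. \<Sum>k = 1..K. T s' k) - (\<Sum>k = 1..K. T n k)"
      unfolding LB_def n_def using Suc by (simp add: sum.cl_ivl_Suc)
    have LBs: "LB s = real K * A s * F (yt s) + real K / 4 * (norm (v 1 1 - v 1 0))\<^sup>2
                - (\<Sum>s' = 2..s. \<Sum>k = 1..K. T s' k)"
      by (simp add: LB_def)
    have "LB n \<le> \<Phi> n 0 (v n 0) + (\<Sum>k = 1..K. \<mu> n / 2 * (norm (v n k - v n (k - 1)))\<^sup>2 + a n * lin n k (v n k))"
      using LBn LBs sumT sumP sumC KF IH(1) by linarith
    also have "\<dots> \<le> \<Phi> n K (v n K)" using lchain[OF n2] by simp
    also have "\<dots> = \<Phi> (Suc n) 0 (v (Suc n) 0)" using Wnext[OF n2] by simp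
    finally show ?case using ytnD by (simp add: n_def)
  qed
  have asum: "(\<Sum>s' = 2..s. a s') = A s - A 1" if "s \<ge> 1" for s
    using that
  proof (induct s rule: nat_induct_at_least)
    case base then show ?case by simp
  next
    case (Suc n) then show ?case using Astep[of "Suc n"] by (simp add: sum.cl_ivl_Suc)
  qed
  have S1: "S \<ge> 1" using S_ge by simp
  have ytSD: "yt S \<in> D" using lower[OF S1] by simp
  have KAS: "0 < real K * A S" using Kpos Apos[OF S1] by simp
  define E where "E s k = A s * (f (y s k) - f (x s k))
                       - A (s - 1) * (f (yt (s - 1)) - f (x s k))
                       + a s * inner (df (x s k) - q s k) (x s k - u)
                       + a s * inner (q s k) (x s k - v s k)
                       - real K * (1 + A (s - 1) * \<gamma>) / 2 * (norm (v s k - v s (k - 1)))\<^sup>2" for s k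
  define R where "R = real K / 2 * (norm (x0 - u))\<^sup>2
                  - real K * (1 + A S * \<gamma>) / 2 * (norm (v S K - u))\<^sup>2
                  - real K / 4 * (norm (v 1 1 - v 1 0))\<^sup>2
                  + (\<Sum>s = 2..S. \<Sum>k = 1..K. E s k)"
  have Rsym: "R = real K / 2 * (norm (x0 - u))\<^sup>2
                  - real K * (1 + A S * \<gamma>) / 2 * (norm (v S K - u))\<^sup>2
                  - real K / 4 * (norm (v 1 1 - v 1 0))\<^sup>2
                  + (\<Sum>s = 2..S. \<Sum>k = 1..K.
                       A s * (f (y s k) - f (x s k))
                       - A (s - 1) * (f (yt (s - 1)) - f (x s k))
                       + a s * inner (df (x s k) - q s k) (x s k - u)
                       + a s * inner (q s k) (x s k - v s k)
                       - real K * (1 + A (s - 1) * \<gamma>) / 2 * (norm (v s k - v s (k - 1)))\<^sup>2)"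
    by (simp add: R_def E_def)
  show ?thesis
  proof (cases "u \<in> D")
    case False
    then have "g u = \<infinity>" by (simp add: D_def)
    then show ?thesis using gD[OF ytSD] KAS Apos[OF S1] by simp
  next
    case True
    have sumE: "(\<Sum>s = 2..S. \<Sum>k = 1..K. E s k) = (\<Sum>s = 2..S. \<Sum>k = 1..K. T s k)
        + (\<Sum>s = 2..S. \<Sum>k = 1..K. a s * inner (df (x s k) - q s k) (x s k - u))"
    proof -
      have "(\<Sum>s = 2..S. \<Sum>k = 1..K. E s k) = (\<Sum>s = 2..S. \<Sum>k = 1..K. T s k + a s * inner (df (x s k) - q s k) (x s k - u))"
        by (intro sum.cong refl) (simp add: E_def T_def algebra_simps)
      then show ?thesis by (simp add: sum.distrib)
    qed
    have sc: "\<Phi> S K (v S K) + real K * (1 + A S * \<gamma>) / 2 * (norm (v S K - u))\<^sup>2 \<le> \<Phi> S K u"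
    proof -
      have e: "real K + (real K * A (S - 1) + real K * a S) * \<gamma> = real K * (1 + A S * \<gamma>)"
        using Astep[OF S1] by (simp add: algebra_simps)
      have "\<Phi> S K (v S K) + (real K + (real K * A (S - 1) + real K * a S) * \<gamma>)/2 * (norm (u - v S K))\<^sup>2 \<le> \<Phi> S K u"
        unfolding \<Phi>_def
        by (rule scm[OF frm_s[OF S_ge order_refl] cpos[OF S_ge, THEN less_imp_le] v_min[OF S_ge order_refl] vD[OF S_ge order_refl] True])
      then show ?thesis unfolding e by (simp add: norm_minus_commute)
    qed
    have low: "LB S \<le> \<Phi> S K (v S K)" using lower[OF S1] Wnext[OF S_ge] by simp
    have up1: "\<Phi> S K u = \<Phi> 1 1 u + (\<Sum>s' = 2..S. \<Sum>j = 1..K. a s' * lin s' j u)"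
      using uchain2[OF S1 True] Phinext[OF S_ge] by simp
    have g0: "f x0 + inner (df x0) (u - x0) \<le> f u" by (rule grad_ineq[OF f_convex f_grad])
    have up2: "\<Phi> 1 1 u \<le> real K / 2 * (norm (x0 - u))\<^sup>2 + real K * a 1 * F u"
    proof -
      have "real K * a 1 * (f x0 + inner (df x0) (u - x0)) \<le> real K * a 1 * f u"
        using g0 Kpos a1_pos by (intro mult_left_mono) auto
      moreover have "\<Phi> 1 1 u = real K / 2 * (norm (x0 - u))\<^sup>2 + real K * a 1 * (f x0 + inner (df x0) (u - x0)) + real K * a 1 * G u"
        unfolding Phi11[OF True] by (simp add: norm_minus_commute algebra_simps)
      moreover have "real K * a 1 * F u = real K * a 1 * f u + real K * a 1 * G u"
        by (simp add: F_def algebra_simps)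
      ultimately show ?thesis by linarith
    qed
    have up3: "a s' * lin s' j u \<le> a s' * F u + a s' * inner (df (x s' j) - q s' j) (x s' j - u)"
      if "s' \<in> {2..S}" for s' j
    proof -
      have gi: "f (x s' j) + inner (df (x s' j)) (u - x s' j) \<le> f u" by (rule grad_ineq[OF f_convex f_grad])
      have "a s' * (f (x s' j) + inner (df (x s' j)) (u - x s' j)) \<le> a s' * f u"
        using gi apos[of s'] that by (intro mult_left_mono) auto
      moreover have "a s' * lin s' j u = a s' * (f (x s' j) + inner (df (x s' j)) (u - x s' j))
           + (a s' * G u + a s' * inner (df (x s' j) - q s' j) (x s' j - u))"
        by (simp add: lin_def inner_diff_left inner_diff_right algebra_simps)
      moreover have "a s' * F u = a s' * f u + a s' * G u" by (simp add: F_def algebra_simps)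
      ultimately show ?thesis by linarith
    qed
    have up4: "(\<Sum>s' = 2..S. \<Sum>j = 1..K. a s' * lin s' j u)
        \<le> (\<Sum>s' = 2..S. \<Sum>j = 1..K. a s' * F u + a s' * inner (df (x s' j) - q s' j) (x s' j - u))"
      by (intro sum_mono up3) auto
    have up4': "(\<Sum>s' = 2..S. \<Sum>j = 1..K. a s' * F u + a s' * inner (df (x s' j) - q s' j) (x s' j - u))
        = (\<Sum>s' = 2..S. \<Sum>j = 1..K. a s' * F u) + (\<Sum>s' = 2..S. \<Sum>j = 1..K. a s' * inner (df (x s' j) - q s' j) (x s' j - u))"
      by (simp add: sum.distrib)
    have up5: "(\<Sum>s' = 2..S. \<Sum>j = 1..K. a s' * F u) = real K * (A S - A 1) * F u"
    proof -
      have "(\<Sum>s' = 2..S. \<Sum>j = 1..K. a s' * F u) = (\<Sum>s' = 2..S. a s') * (real K * F u)"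
        by (simp add: sum_distrib_right algebra_simps) (simp add: sum_distrib_left)
      then show ?thesis using asum[OF S1] by simp
    qed
    have e6: "real K * (A S - A 1) * F u + real K * a 1 * F u = real K * A S * F u"
      using A1 by (simp add: algebra_simps)
    have e7: "real K * A S * (F (yt S) - F u) = real K * A S * F (yt S) - real K * A S * F u"
      by (simp add: algebra_simps)
    have LBS: "LB S = real K * A S * F (yt S) + real K / 4 * (norm (v 1 1 - v 1 0))\<^sup>2
                - (\<Sum>s' = 2..S. \<Sum>k = 1..K. T s' k)" by (simp add: LB_def)
    have fin: "real K * A S * (F (yt S) - F u) \<le> R"
      unfolding R_def sumE e7 using low sc up1 up2 up4 up4' up5 e6 LBS by linarith
    show ?thesis
      unfolding Rsym[symmetric] using fin gD[OF ytSD] gD[OF True] by (simp add: F_def)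
  qed
qed

end
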